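(* (a) Let $L\in\mathbb{R}\cup\{\infty\}$, let $c<L/2$ be real, and let $\lambda\in\mathbb{R}$ if $L<\infty$ and $\lambda>0$ if $L=\infty$. For $\varepsilon>0$ set $c(\varepsilon):=e^{c/\varepsilon}$ and $\alpha(\varepsilon):=e^{-L/\varepsilon}$ (so $\alpha(\varepsilon)=0$ if $L=\infty$), and let $X(\varepsilon)\sim\mathrm{GIG}(\varepsilon\lambda,c(\varepsilon)\alpha(\varepsilon),c(\varepsilon))$. Then $\varepsilon\log X(\varepsilon)\to X$ in distribution as $\varepsilon\downarrow0$, where $X\sim\mathrm{stExp}(\lambda,c,L-c)$. (b) Let $\lambda>0$, $c\in\mathbb{R}$, $c(\varepsilon):=e^{c/\varepsilon}$, and $X(\varepsilon)\sim\mathrm{Gam}(\varepsilon\lambda,c(\varepsilon))$. Then $-\varepsilon\log X(\varepsilon)\to X$ in distribution as $\varepsilon\downarrow0$, where $X\sim\mathrm{sExp}(\lambda,c)$.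
   Context: $\mathrm{GIG}(\lambda,c_1,c_2)$ has density proportional to $x^{-\lambda-1}e^{-c_1x-c_2x^{-1}}\mathbf{1}_{(0,\infty)}(x)$, with $\mathrm{GIG}(\lambda,0,c_2)$ the inverse gamma law with density proportional to $x^{-\lambda-1}e^{-c_2x^{-1}}$ on $(0,\infty)$. $\mathrm{Gam}(\lambda,c)$ has density proportional to $x^{\lambda-1}e^{-cx}\mathbf{1}_{(0,\infty)}(x)$. $\mathrm{stExp}(\lambda,c_1,c_2)$ has density proportional to $e^{-\lambda x}\mathbf{1}_{[c_1,c_2]}(x)$, and $\mathrm{stExp}(\lambda,c,\infty)=\mathrm{sExp}(\lambda,c)$ (for $\lambda>0$) has density proportional to $e^{-\lambda x}\mathbf{1}_{[c,\infty)}(x)$. *)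

theory Defs
  imports "HOL-Analysis.Analysis"
begin

definition law_prop :: "(real \<Rightarrow> real) \<Rightarrow> real measure" where
  "law_prop f = density lborel (\<lambda>x. ennreal (f x / integral\<^sup>L lborel f))"

definition GIG :: "real \<Rightarrow> real \<Rightarrow> real \<Rightarrow> real measure" where
  "GIG l c1 c2 = law_prop (\<lambda>x. if 0 < x then x powr (-l - 1) * exp (- c1 * x - c2 / x) else 0)"

definition Gam :: "real \<Rightarrow> real \<Rightarrow> real measure" where
  "Gam l c = law_prop (\<lambda>x. if 0 < x then x powr (l - 1) * exp (- c * x) else 0)"

definition stExp :: "real \<Rightarrow> real \<Rightarrow> ereal \<Rightarrow> real measure" where
  "stExp l c1 c2 = law_prop (\<lambda>x. if c1 \<le> x \<and> ereal x \<le> c2 then exp (- l * x) else 0)"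

definition sExp :: "real \<Rightarrow> real \<Rightarrow> real measure" where
  "sExp l c = stExp l c \<infinity>"

definition conv_distr :: "('a \<Rightarrow> real measure) \<Rightarrow> 'a filter \<Rightarrow> real measure \<Rightarrow> bool" where
  "conv_distr M F N \<longleftrightarrow>
     (\<forall>f :: real \<Rightarrow> real. continuous_on UNIV f \<and> bounded (range f) \<longrightarrow>
        ((\<lambda>e. integral\<^sup>L (M e) f) \<longlongrightarrow> integral\<^sup>L N f) F)"

definition alpha_eps :: "ereal \<Rightarrow> real \<Rightarrow> real" where
  "alpha_eps L e = (case L of ereal r \<Rightarrow> exp (- r / e) | _ \<Rightarrow> 0)"

end

theory Submission
  imports Defs "HOL-Probability.Sinc_Integral" "HOL-Real_Asymp.Real_Asymp"
begin


lemma SUB: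
  fixes h :: "real \<Rightarrow> real" and s :: real
  assumes s: "s \<noteq> 0" and h: "integrable lborel h"
  shows "integrable lborel (\<lambda>x. if 0 < x then h (s * ln x) / x else 0)"
    "integral\<^sup>L lborel (\<lambda>x. if 0 < x then h (s * ln x) / x else 0) = integral\<^sup>L lborel h / \<bar>s\<bar>"
proof -
  define g where "g y = exp (y / s)" for y
  define g' where "g' y = exp (y / s) / s" for y
  define f where "f x = h (s * ln x) / x" for x
  have hm: "h \<in> borel_measurable borel" using h by auto
  have der: "(g has_field_derivative g' y) (at y within UNIV)" for y
    unfolding g_def g'_def using s by (auto intro!: derivative_eq_intros)
  have inj: "inj_on g UNIV" unfolding g_def inj_on_def using s by auto
  have img: "g ` UNIV = {0<..}"
  proof safe
    fix x :: real assume "0 < x" then have "x = g (s * ln x)" using s by (simp add: g_def)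
    then show "x \<in> range g" by blast
  qed (simp add: g_def)
  have eq: "\<bar>g' y\<bar> * f (g y) = h y / \<bar>s\<bar>" for y
    using s by (simp add: g_def g'_def f_def field_simps)
  have hai: "h absolutely_integrable_on UNIV"
    using h hm by (simp add: set_integrable_def integrable_completion)
  have "(\<lambda>y. h y / \<bar>s\<bar>) absolutely_integrable_on UNIV"
    using hai by (simp add: set_integrable_def)
  moreover have "integral UNIV (\<lambda>y. h y / \<bar>s\<bar>) = integral\<^sup>L lborel h / \<bar>s\<bar>"
    using integral_lborel[of "\<lambda>y. h y / \<bar>s\<bar>"] h by simp
  moreover have X: "(\<lambda>x. \<bar>g' x\<bar> * f (g x)) absolutely_integrable_on UNIV \<and>
           integral UNIV (\<lambda>x. \<bar>g' x\<bar> * f (g x)) = integral\<^sup>L lborel h / \<bar>s\<bar>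
     \<longleftrightarrow> f absolutely_integrable_on (g ` UNIV) \<and> integral (g ` UNIV) f = integral\<^sup>L lborel h / \<bar>s\<bar>"
    by (rule has_absolute_integral_change_of_variables_1'[OF _ der inj]) simp
  moreover have "(\<lambda>x. \<bar>g' x\<bar> * f (g x)) = (\<lambda>y. h y / \<bar>s\<bar>)" using eq by auto
  ultimately have "f absolutely_integrable_on {0<..} \<and> integral {0<..} f = integral\<^sup>L lborel h / \<bar>s\<bar>"
    using img by metis
  then have fa: "f absolutely_integrable_on {0<..}" and fi: "integral {0<..} f = integral\<^sup>L lborel h / \<bar>s\<bar>" by auto
  have ind: "(\<lambda>x. if 0 < x then h (s * ln x) / x else 0) = (\<lambda>x. indicator {0<..} x *\<^sub>R f x)"
    by (auto simp: f_def fun_eq_iff indicator_def)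
  have meas: "(\<lambda>x. if 0 < x then h (s * ln x) / x else 0) \<in> borel_measurable lborel"
    using hm by measurable
  have il: "integrable lebesgue (\<lambda>x. if 0 < x then h (s * ln x) / x else 0)"
    using fa unfolding ind set_integrable_def by simp
  then show "integrable lborel (\<lambda>x. if 0 < x then h (s * ln x) / x else 0)"
    using il integrable_completion[OF meas] by simp
  have "integral\<^sup>L lebesgue (\<lambda>x. if 0 < x then h (s * ln x) / x else 0) = integral {0<..} f"
    using set_lebesgue_integral_eq_integral(2)[OF fa] unfolding ind set_lebesgue_integral_def by simp
  then show "integral\<^sup>L lborel (\<lambda>x. if 0 < x then h (s * ln x) / x else 0) = integral\<^sup>L lborel h / \<bar>s\<bar>"
    using fi integral_completion[OF meas] by simp
qed



definition qf :: "real \<Rightarrow> real \<Rightarrow> bool \<Rightarrow> real \<Rightarrow> real \<Rightarrow> real \<Rightarrow> real" where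
  "qf lam c fin r t y = exp (- lam * y - (if fin then exp (t * (y - r)) else 0) - exp (t * (c - y)))"

definition g0 :: "real \<Rightarrow> real \<Rightarrow> bool \<Rightarrow> real \<Rightarrow> real \<Rightarrow> real" where
  "g0 lam c fin r y = (if c \<le> y \<and> (fin \<longrightarrow> y \<le> r) then exp (- lam * y) else 0)"

lemma exp_tangent: fixes K u :: real assumes "K > 0" shows "K * (1 + u - ln K) \<le> exp u"
proof -
  have "1 + (u - ln K) \<le> exp (u - ln K)" using exp_ge_add_one_self[of "u - ln K"] by linarith
  also have "\<dots> = exp u / K" using assms by (simp add: exp_diff)
  finally show ?thesis using assms by (simp add: field_simps)
qed

lemma exp_t_ge: fixes t u :: real assumes "1 \<le> t" shows "exp u - 1 \<le> exp (t * u)"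
proof (cases "u \<ge> 0")
  case True
  have "0 \<le> (t - 1) * u" using assms True by (intro mult_nonneg_nonneg) auto
  then have "u \<le> t * u" by (simp add: algebra_simps)
  then have "exp u \<le> exp (t * u)" by simp
  then show ?thesis by linarith
next
  case False
  then have "exp u \<le> 1" by simp
  then show ?thesis using exp_gt_zero[of "t*u"] by linarith
qed

lemma qf_bound:
  fixes lam c r t y :: real
  assumes nf: "\<not> fin \<longrightarrow> lam > 0" and t: "1 \<le> t"
  defines "K \<equiv> \<bar>lam\<bar> + 1"
  defines "\<mu> \<equiv> (if fin then 1 else min lam 1)"
  defines "C \<equiv> 2 + K * (\<bar>c\<bar> + \<bar>r\<bar> + \<bar>ln K\<bar> + 1)"
  shows "qf lam c fin r t y \<le> exp (C - \<mu> * \<bar>y\<bar>)"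
proof -
  have K: "K > 0" unfolding K_def by simp
  have mu1: "\<mu> \<le> 1" unfolding \<mu>_def by auto
  have mu0: "0 < \<mu>" using nf unfolding \<mu>_def by auto
  have E: "exp (c - y) - 1 \<le> exp (t * (c - y))" by (rule exp_t_ge[OF t])
  have Bnn: "0 \<le> (if fin then exp (t * (y - r)) else 0)" by simp
  have Cp: "2 + K * (\<bar>c\<bar> + \<bar>r\<bar> + \<bar>ln K\<bar> + 1) \<le> C" unfolding C_def by simp
  have a1: "K * (- ln K) \<le> K * \<bar>ln K\<bar>" by (rule mult_left_mono) (use K in auto)
  have a2: "K * (- r) \<le> K * \<bar>r\<bar>" by (rule mult_left_mono) (use K in auto)
  have a3: "K * (- c) \<le> K * \<bar>c\<bar>" by (rule mult_left_mono) (use K in auto)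
  have KlnK: "- (K * ln K) \<le> K * \<bar>ln K\<bar>" "- (K * r) \<le> K * \<bar>r\<bar>" "- (K * c) \<le> K * \<bar>c\<bar>"
    using a1 a2 a3 by simp_all
  have Kd: "K * (\<bar>c\<bar> + \<bar>r\<bar> + \<bar>ln K\<bar> + 1) = K * \<bar>c\<bar> + K * \<bar>r\<bar> + K * \<bar>ln K\<bar> + K"
    by (simp add: algebra_simps)
  have Kpos: "0 \<le> K * \<bar>c\<bar>" "0 \<le> K * \<bar>r\<bar>" "0 \<le> K * \<bar>ln K\<bar>" using K by auto
  have "- lam * y - (if fin then exp (t * (y - r)) else 0) - exp (t * (c - y)) \<le> C - \<mu> * \<bar>y\<bar>"
  proof (cases "y \<ge> 0")
    case y: True
    show ?thesis
    proof (cases fin)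
      case True
      have B: "exp (y - r) - 1 \<le> exp (t * (y - r))" by (rule exp_t_ge[OF t])
      have T: "K * (1 + (y - r) - ln K) \<le> exp (y - r)" by (rule exp_tangent[OF K])
      have ex: "K * (1 + (y - r) - ln K) = K + K * y - K * r - K * ln K" by (simp add: algebra_simps)
      have Ky: "K * y = \<bar>lam\<bar> * y + y" unfolding K_def by (simp add: algebra_simps)
      have ly: "- lam * y \<le> \<bar>lam\<bar> * y" using mult_right_mono[of "-lam" "\<bar>lam\<bar>" y] y by simp
      have "0 \<le> exp (t * (c - y))" by simp
      moreover have "\<mu> = 1" using True unfolding \<mu>_def by simp
      moreover have "(if fin then exp (t * (y - r)) else 0) = exp (t * (y - r))" using True by simp
      ultimately show ?thesis using B T ex Ky ly y KlnK Kpos Cp K Kd by (simp only:) linarith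
    next
      case False
      then have "\<mu> \<le> lam" "lam > 0" using nf unfolding \<mu>_def by auto
      then have g1: "- lam * y \<le> - \<mu> * y" using mult_right_mono[of "-lam" "-\<mu>" y] y by simp
      have g2: "0 \<le> exp (t * (c - y))" by simp
      have g3: "0 \<le> C" using Cp Kpos Kd K by linarith
      have g4: "(if fin then exp (t * (y - r)) else 0) = 0" using False by simp
      have g5: "\<bar>y\<bar> = y" using y by simp
      show ?thesis unfolding g4 g5 using g1 g2 g3 by linarith
    qed
  next
    case y: False
    have T: "K * (1 + (c - y) - ln K) \<le> exp (c - y)" by (rule exp_tangent[OF K])
    have ex: "K * (1 + (c - y) - ln K) = K + K * c - K * y - K * ln K" by (simp add: algebra_simps)
    have Ky: "K * y = \<bar>lam\<bar> * y + y" unfolding K_def by (simp add: algebra_simps)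
    have ly: "- lam * y \<le> - \<bar>lam\<bar> * y" using mult_right_mono_neg[of "-\<bar>lam\<bar>" "-lam" y] y by simp
    have "0 \<le> (1 - \<mu>) * (- y)" using y mu1 by (intro mult_nonneg_nonneg) auto
    then have my: "- \<mu> * \<bar>y\<bar> \<ge> y" using y by (simp add: algebra_simps)
    have y': "y < 0" using y by simp
    obtain B where Bd: "B = (if fin then exp (t * (y - r)) else 0)" by blast
    with Bnn have B0: "0 \<le> B" by simp
    have "- lam * y - B - exp (t * (c - y)) \<le> C - \<mu> * \<bar>y\<bar>"
    proof -
      have s1: "- lam * y - B - exp (t * (c - y)) \<le> - lam * y - exp (c - y) + 1" using E B0 by linarith
      have s2: "exp (c - y) \<ge> K + K * c - (\<bar>lam\<bar> * y + y) - K * ln K" using T ex Ky by linarith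
      have s3: "- lam * y - exp (c - y) + 1 \<le> y - K - K * c + K * ln K + 1" using s2 ly by linarith
      have s4: "y - K - K * c + K * ln K + 1 \<le> C - \<mu> * \<bar>y\<bar>" using my KlnK Kpos Cp Kd K by linarith
      show ?thesis using s1 s3 s4 by linarith
    qed
    then show ?thesis unfolding Bd .
  qed
  then show ?thesis unfolding qf_def by simp
qed

lemma integrable_exp_abs:
  fixes C \<mu> :: real assumes "\<mu> > 0"
  shows "integrable lborel (\<lambda>y. exp (C - \<mu> * \<bar>y\<bar>))"
proof -
  define F where "F x = x^0 * exp (-x) * indicator {0 ..} x" for x :: real
  have F: "integrable lborel F" unfolding F_def
    using has_bochner_integral_I0i_power_exp_m'[of 0] by (rule integrable.intros)
  have F1: "integrable lborel (\<lambda>y. F (0 + \<mu> * y))"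
    using lborel_integrable_real_affine_iff[of \<mu> F 0] F assms by simp
  have F2: "integrable lborel (\<lambda>y. F (0 + (- \<mu>) * y))"
    using lborel_integrable_real_affine_iff[of "-\<mu>" F 0] F assms by simp
  have S: "integrable lborel (\<lambda>y. exp C * (F (0 + \<mu> * y) + F (0 + (- \<mu>) * y)))"
    using F1 F2 by auto
  show ?thesis
  proof (rule Bochner_Integration.integrable_bound[OF S])
    show "(\<lambda>y. exp (C - \<mu> * \<bar>y\<bar>)) \<in> borel_measurable lborel" by measurable
    show "AE y in lborel. norm (exp (C - \<mu> * \<bar>y\<bar>)) \<le> norm (exp C * (F (0 + \<mu> * y) + F (0 + (- \<mu>) * y)))"
    proof (rule AE_I2)
      fix y :: real
      have "exp (C - \<mu> * \<bar>y\<bar>) = exp C * exp (- (\<mu> * \<bar>y\<bar>))" by (simp add: exp_diff exp_minus field_simps)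
      moreover have "exp (- (\<mu> * \<bar>y\<bar>)) \<le> F (0 + \<mu> * y) + F (0 + (- \<mu>) * y)"
        using assms unfolding F_def
        by (cases "y \<ge> 0") (auto simp: indicator_def zero_le_mult_iff mult_le_0_iff)
      moreover have "0 \<le> F (0 + \<mu> * y) + F (0 + (- \<mu>) * y)" unfolding F_def by (auto simp: indicator_def)
      ultimately show "norm (exp (C - \<mu> * \<bar>y\<bar>)) \<le> norm (exp C * (F (0 + \<mu> * y) + F (0 + (- \<mu>) * y)))"
        by simp
    qed
  qed
qed



lemma lim_pos: fixes a d :: real assumes "d > 0"
  shows "((\<lambda>t. exp (a - exp (t * d))) \<longlongrightarrow> 0) at_top"
  using assms by real_asymp

lemma lim_neg: fixes d :: real assumes "d < 0"
  shows "((\<lambda>t. exp (t * d)) \<longlongrightarrow> 0) at_top"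
  using assms by real_asymp

lemma qf_lim:
  assumes "y \<noteq> c" "fin \<longrightarrow> y \<noteq> r"
  shows "((\<lambda>t. qf lam c fin r t y) \<longlongrightarrow> g0 lam c fin r y) at_top"
proof (cases "c \<le> y \<and> (fin \<longrightarrow> y \<le> r)")
  case True
  then have g: "g0 lam c fin r y = exp (- lam * y - (if fin then 0 else 0) - 0)" by (simp add: g0_def)
  have E: "((\<lambda>t. exp (t * (c - y))) \<longlongrightarrow> 0) at_top" using True assms by (intro lim_neg) auto
  have B: "((\<lambda>t. if fin then exp (t * (y - r)) else 0) \<longlongrightarrow> (if fin then 0 else 0)) at_top"
    using True assms by (cases fin) (auto intro!: lim_neg)
  show ?thesis unfolding g qf_def by (intro tendsto_intros E B)
next
  case False
  then have g: "g0 lam c fin r y = 0" by (simp add: g0_def)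
  have nn: "0 \<le> qf lam c fin r t y" for t unfolding qf_def by simp
  show ?thesis unfolding g
  proof (cases "y < c")
    case True
    have le: "qf lam c fin r t y \<le> exp (- lam * y - exp (t * (c - y)))" for t
      unfolding qf_def by simp
    show "((\<lambda>t. qf lam c fin r t y) \<longlongrightarrow> 0) at_top"
      by (rule tendsto_sandwich[OF _ _ tendsto_const lim_pos[of "c - y" "- lam * y"]])
         (use True nn le in auto)
  next
    case False
    with \<open>\<not> (c \<le> y \<and> (fin \<longrightarrow> y \<le> r))\<close> have f: fin and yr: "y > r" by auto
    have le: "qf lam c fin r t y \<le> exp (- lam * y - exp (t * (y - r)))" for t
      unfolding qf_def using f by simp
    show "((\<lambda>t. qf lam c fin r t y) \<longlongrightarrow> 0) at_top"
      by (rule tendsto_sandwich[OF _ _ tendsto_const lim_pos[of "y - r" "- lam * y"]])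
         (use yr nn le in auto)
  qed
qed



lemma qf_nonneg: "0 \<le> qf lam c fin r t y" unfolding qf_def by simp

lemma qf_meas[measurable]: "qf lam c fin r t \<in> borel_measurable borel"
  unfolding qf_def by (cases fin) simp_all

lemma g0_meas[measurable]: "g0 lam c fin r \<in> borel_measurable borel"
  unfolding g0_def by measurable

lemma conv_main:
  fixes f :: "real \<Rightarrow> real"
  assumes nf: "\<not> fin \<longrightarrow> lam > 0"
    and fm: "f \<in> borel_measurable borel" and fb: "\<And>y. \<bar>f y\<bar> \<le> M"
  shows "((\<lambda>t. \<integral>y. f y * qf lam c fin r t y \<partial>lborel) \<longlongrightarrow> (\<integral>y. f y * g0 lam c fin r y \<partial>lborel)) at_top"
    "integrable lborel (\<lambda>y. f y * g0 lam c fin r y)"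
    "\<And>t. 1 \<le> t \<Longrightarrow> integrable lborel (\<lambda>y. f y * qf lam c fin r t y)"
proof -
  note fm' [measurable] = fm
  define K where "K = \<bar>lam\<bar> + 1"
  define \<mu> where "\<mu> = (if fin then 1 else min lam 1)"
  define C where "C = 2 + K * (\<bar>c\<bar> + \<bar>r\<bar> + \<bar>ln K\<bar> + 1)"
  have mu0: "0 < \<mu>" using nf unfolding \<mu>_def by auto
  define w where "w y = M * exp (C - \<mu> * \<bar>y\<bar>)" for y
  have wi: "integrable lborel w" unfolding w_def using integrable_exp_abs[OF mu0] by simp
  have M0: "0 \<le> M" using fb[of 0] by linarith
  have bd: "\<bar>f y * qf lam c fin r t y\<bar> \<le> w y" if "1 \<le> t" for t y
  proof -
    have "qf lam c fin r t y \<le> exp (C - \<mu> * \<bar>y\<bar>)"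
      using qf_bound[OF nf that, of c r y] unfolding K_def \<mu>_def C_def by simp
    then show ?thesis unfolding w_def abs_mult using qf_nonneg[of lam c fin r t y] M0
      by (intro mult_mono fb) auto
  qed
  have ae: "AE y in lborel. y \<noteq> c \<and> (fin \<longrightarrow> y \<noteq> r)"
    using AE_lborel_singleton[of c] AE_lborel_singleton[of r] by eventually_elim auto
  have lim: "AE y in lborel. ((\<lambda>t. f y * qf lam c fin r t y) \<longlongrightarrow> f y * g0 lam c fin r y) at_top"
    using ae by eventually_elim (intro tendsto_mult_left qf_lim, auto)
  have ev: "\<forall>\<^sub>F t in at_top. AE y in lborel. norm (f y * qf lam c fin r t y) \<le> w y"
    using eventually_ge_at_top[of "1::real"] by eventually_elim (auto intro: bd)
  show "((\<lambda>t. \<integral>y. f y * qf lam c fin r t y \<partial>lborel) \<longlongrightarrow> (\<integral>y. f y * g0 lam c fin r y \<partial>lborel)) at_top"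
    by (rule integral_dominated_convergence_at_top[OF _ _ wi lim ev]) measurable
  show "integrable lborel (\<lambda>y. f y * g0 lam c fin r y)"
    by (rule integrable_dominated_convergence_at_top[OF _ _ wi lim ev]) measurable
  show "integrable lborel (\<lambda>y. f y * qf lam c fin r t y)" if "1 \<le> t" for t
    by (rule Bochner_Integration.integrable_bound[OF wi]) (use bd[OF that] in \<open>auto intro!: AE_I2 order_trans[OF _ abs_ge_self]\<close>)
qed

lemma g0_pos:
  assumes nf: "\<not> fin \<longrightarrow> lam > 0" and cr: "fin \<longrightarrow> c < r"
  shows "0 < (\<integral>y. g0 lam c fin r y \<partial>lborel)"
proof -
  define d where "d = (if fin then min (c + 1) r else c + 1)"
  have cd: "c < d" using cr unfolding d_def by auto
  define m where "m = exp (- (\<bar>lam\<bar> * (\<bar>c\<bar> + \<bar>d\<bar>)))"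
  have m0: "0 < m" unfolding m_def by simp
  have gi: "integrable lborel (g0 lam c fin r)"
    using conv_main(2)[OF nf, of "\<lambda>_. 1" 1 c r] by simp
  have le: "m * indicator {c..d} y \<le> g0 lam c fin r y" for y
  proof (cases "y \<in> {c..d}")
    case True
    then have "c \<le> y \<and> (fin \<longrightarrow> y \<le> r)" unfolding d_def by (auto split: if_splits)
    then have g: "g0 lam c fin r y = exp (- lam * y)" unfolding g0_def by simp
    have "\<bar>y\<bar> \<le> \<bar>c\<bar> + \<bar>d\<bar>" using True by auto
    then have "\<bar>lam\<bar> * \<bar>y\<bar> \<le> \<bar>lam\<bar> * (\<bar>c\<bar> + \<bar>d\<bar>)" by (intro mult_left_mono) auto
    moreover have "- lam * y \<ge> - (\<bar>lam\<bar> * \<bar>y\<bar>)" by (simp add: abs_mult[symmetric])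
    ultimately have "- (\<bar>lam\<bar> * (\<bar>c\<bar> + \<bar>d\<bar>)) \<le> - lam * y" by linarith
    then show ?thesis using True unfolding g m_def by simp
  next
    case False then show ?thesis unfolding g0_def by simp
  qed
  have "0 < m * (d - c)" using m0 cd by simp
  also have "m * (d - c) = (\<integral>y. m * indicator {c..d} y \<partial>lborel)" using cd by simp
  also have "\<dots> \<le> (\<integral>y. g0 lam c fin r y \<partial>lborel)"
    by (rule integral_mono[OF _ gi le]) (use cd in \<open>simp add: integrable_indicator_iff\<close>)
  finally show ?thesis .
qed



lemma law_prop_integral:
  fixes g f :: "real \<Rightarrow> real"
  assumes gm[measurable]: "g \<in> borel_measurable borel" and gnn: "\<And>x. 0 \<le> g x"
    and fm[measurable]: "f \<in> borel_measurable borel"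
  shows "integral\<^sup>L (law_prop g) f = (\<integral>x. f x * g x \<partial>lborel) / (\<integral>x. g x \<partial>lborel)"
proof -
  have Z: "0 \<le> (\<integral>x. g x \<partial>lborel)" using gnn by simp
  have "integral\<^sup>L (law_prop g) f = (\<integral>x. (g x / (\<integral>x. g x \<partial>lborel)) * f x \<partial>lborel)"
    unfolding law_prop_def by (subst integral_density) (use gnn Z in auto)
  also have "\<dots> = (\<integral>x. (f x * g x) / (\<integral>x. g x \<partial>lborel) \<partial>lborel)"
    by (simp add: field_simps)
  finally show ?thesis by simp
qed

lemma dist_formula:
  fixes p Q f :: "real \<Rightarrow> real" and s M :: real
  assumes s: "s \<noteq> 0" and Qm[measurable]: "Q \<in> borel_measurable borel" and Qnn: "\<And>y. 0 \<le> Q y"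
    and Qi: "integrable lborel Q" and fm[measurable]: "f \<in> borel_measurable borel"
    and fb: "\<And>y. \<bar>f y\<bar> \<le> M"
    and p: "\<And>x. p x = (if 0 < x then Q (s * ln x) / x else 0)"
  shows "integral\<^sup>L (distr (law_prop p) borel (\<lambda>x. s * ln x)) f
      = (\<integral>y. f y * Q y \<partial>lborel) / (\<integral>y. Q y \<partial>lborel)"
proof -
  have pe: "p = (\<lambda>x. if 0 < x then Q (s * ln x) / x else 0)" using p by auto
  have pm[measurable]: "p \<in> borel_measurable borel" unfolding pe by measurable
  have pnn: "0 \<le> p x" for x unfolding pe using Qnn by auto
  have fQi: "integrable lborel (\<lambda>y. f y * Q y)"
    by (rule Bochner_Integration.integrable_bound[of _ "\<lambda>y. M * Q y"])
       (use Qi fb Qnn in \<open>auto intro!: AE_I2 simp: abs_mult intro!: mult_right_mono order_trans[OF fb abs_ge_self]\<close>)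
  have "integral\<^sup>L (distr (law_prop p) borel (\<lambda>x. s * ln x)) f = integral\<^sup>L (law_prop p) (\<lambda>x. f (s * ln x))"
    by (rule integral_distr) (simp_all add: law_prop_def)
  also have "\<dots> = (\<integral>x. f (s * ln x) * p x \<partial>lborel) / (\<integral>x. p x \<partial>lborel)"
    by (rule law_prop_integral) (use pnn in auto)
  also have "(\<lambda>x. f (s * ln x) * p x) = (\<lambda>x. if 0 < x then (\<lambda>y. f y * Q y) (s * ln x) / x else 0)"
    unfolding pe by auto
  also have "(\<integral>x. (if 0 < x then (\<lambda>y. f y * Q y) (s * ln x) / x else 0) \<partial>lborel) = (\<integral>y. f y * Q y \<partial>lborel) / \<bar>s\<bar>"
    by (rule SUB(2)[OF s fQi])
  also have "(\<integral>x. p x \<partial>lborel) = (\<integral>y. Q y \<partial>lborel) / \<bar>s\<bar>"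
    unfolding pe by (rule SUB(2)[OF s Qi])
  finally show ?thesis using s by simp
qed

lemma final_conv:
  fixes s :: "real \<Rightarrow> real" and p :: "real \<Rightarrow> real \<Rightarrow> real"
  assumes nf: "\<not> fin \<longrightarrow> lam > 0" and cr: "fin \<longrightarrow> c < r"
    and s: "\<And>e. 0 < e \<Longrightarrow> s e \<noteq> 0"
    and p: "\<And>e x. 0 < e \<Longrightarrow> p e x = (if 0 < x then qf lam c fin r (1 / e) (s e * ln x) / x else 0)"
  shows "conv_distr (\<lambda>e. distr (law_prop (p e)) borel (\<lambda>x. s e * ln x)) (at_right 0) (law_prop (g0 lam c fin r))"
  unfolding conv_distr_def
proof safe
  fix f :: "real \<Rightarrow> real"
  assume fc: "continuous_on UNIV f" and fbd: "bounded (range f)"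
  from fc have fm[measurable]: "f \<in> borel_measurable borel" by (rule borel_measurable_continuous_onI)
  obtain M where fb: "\<And>y. \<bar>f y\<bar> \<le> M" using fbd unfolding bounded_iff by auto
  have N: "integral\<^sup>L (law_prop (g0 lam c fin r)) f
      = (\<integral>y. f y * g0 lam c fin r y \<partial>lborel) / (\<integral>y. g0 lam c fin r y \<partial>lborel)"
    by (rule law_prop_integral) (auto simp: g0_def)
  have l1: "((\<lambda>t. \<integral>y. f y * qf lam c fin r t y \<partial>lborel) \<longlongrightarrow> (\<integral>y. f y * g0 lam c fin r y \<partial>lborel)) at_top"
    by (rule conv_main(1)[OF nf fm fb])
  have l2: "((\<lambda>t. \<integral>y. 1 * qf lam c fin r t y \<partial>lborel) \<longlongrightarrow> (\<integral>y. 1 * g0 lam c fin r y \<partial>lborel)) at_top"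
    by (rule conv_main(1)[OF nf, of "\<lambda>_. 1" 1]) auto
  have pos: "(\<integral>y. g0 lam c fin r y \<partial>lborel) \<noteq> 0" using g0_pos[OF nf cr] by simp
  have lim: "((\<lambda>t. (\<integral>y. f y * qf lam c fin r t y \<partial>lborel) / (\<integral>y. qf lam c fin r t y \<partial>lborel))
      \<longlongrightarrow> integral\<^sup>L (law_prop (g0 lam c fin r)) f) at_top"
    unfolding N using l1 l2 pos by (intro tendsto_divide) auto
  have ev: "\<forall>\<^sub>F t in at_top. (\<integral>y. f y * qf lam c fin r t y \<partial>lborel) / (\<integral>y. qf lam c fin r t y \<partial>lborel)
      = integral\<^sup>L (distr (law_prop (p (inverse t))) borel (\<lambda>x. s (inverse t) * ln x)) f"
    using eventually_ge_at_top[of "1::real"]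
  proof eventually_elim
    case (elim t)
    have e: "0 < inverse t" using elim by simp
    have Qi: "integrable lborel (qf lam c fin r t)"
      using conv_main(3)[OF nf, where f="\<lambda>_. 1" and M=1 and c=c and r=r and t=t] elim by simp
    show ?case
      by (rule dist_formula[OF s[OF e] _ _ Qi fm fb, symmetric])
         (use p[OF e] in \<open>auto simp: qf_nonneg divide_inverse\<close>)
  qed
  show "((\<lambda>e. integral\<^sup>L (distr (law_prop (p e)) borel (\<lambda>x. s e * ln x)) f)
      \<longlongrightarrow> integral\<^sup>L (law_prop (g0 lam c fin r)) f) (at_right 0)"
    unfolding filterlim_at_right_to_top
    using tendsto_cong[OF ev] lim by simp
qed



lemma GIG_pt:
  fixes e x lam c :: real and L :: ereal
  assumes e: "0 < e" and x: "0 < x" and L: "L \<noteq> -\<infinity>"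
  shows "x powr (- (e * lam) - 1) * exp (- (exp (c / e) * alpha_eps L e) * x - exp (c / e) / x)
    = qf lam c (L \<noteq> \<infinity>) (real_of_ereal L - c) (1 / e) (e * ln x) / x"
proof -
  define u where "u = ln x"
  have xu: "x = exp u" unfolding u_def using x by simp
  have h1: "x powr (- (e * lam) - 1) = exp (- lam * (e * u)) / x"
    using x unfolding powr_def u_def by (simp add: exp_diff algebra_simps)
  have h2: "exp (c / e) * alpha_eps L e * x
      = (if L \<noteq> \<infinity> then exp (1 / e * (e * u - (real_of_ereal L - c))) else 0)"
  proof (cases L)
    case (real l)
    have "exp (c / e) * exp (- l / e) * exp u = exp (c / e + (- l / e) + u)" by (simp only: exp_add)
    also have "c / e + (- l / e) + u = 1 / e * (e * u - (l - c))" using e by (simp add: field_simps)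
    finally show ?thesis using real xu by (simp add: alpha_eps_def)
  qed (use L in \<open>auto simp: alpha_eps_def\<close>)
  have h3: "exp (c / e) / x = exp (1 / e * (c - e * u))"
  proof -
    have "1 / e * (c - e * u) = c / e - u" using e by (simp add: field_simps)
    then show ?thesis using xu by (simp add: exp_diff)
  qed
  define B where "B = (if L \<noteq> \<infinity> then exp (1 / e * (e * u - (real_of_ereal L - c))) else 0)"
  define E where "E = exp (1 / e * (c - e * u))"
  have "x powr (- (e * lam) - 1) * exp (- (exp (c / e) * alpha_eps L e) * x - exp (c / e) / x)
      = exp (- lam * (e * u)) / x * exp (- B - E)"
    using h1 h2 h3 unfolding B_def E_def by simp
  also have "\<dots> = exp (- lam * (e * u) - B - E) / x"
    by (simp add: exp_diff exp_minus exp_add field_simps)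
  also have "\<dots> = qf lam c (L \<noteq> \<infinity>) (real_of_ereal L - c) (1 / e) (e * ln x) / x"
    unfolding qf_def B_def E_def u_def by simp
  finally show ?thesis .
qed

lemma Gam_pt:
  fixes e x lam c :: real
  assumes e: "0 < e" and x: "0 < x"
  shows "x powr (e * lam - 1) * exp (- exp (c / e) * x) = qf lam c False 0 (1 / e) (- e * ln x) / x"
proof -
  define u where "u = ln x"
  have xu: "x = exp u" unfolding u_def using x by simp
  have h1: "x powr (e * lam - 1) = exp (- lam * (- e * u)) / x"
    using x unfolding powr_def u_def by (simp add: exp_diff algebra_simps)
  have h3: "exp (c / e) * x = exp (1 / e * (c - (- e * u)))"
  proof -
    have "1 / e * (c - (- e * u)) = c / e + u" using e by (simp add: field_simps)
    then show ?thesis using xu by (simp add: exp_add)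
  qed
  have "x powr (e * lam - 1) * exp (- exp (c / e) * x) = exp (- lam * (- e * u)) / x * exp (- exp (1 / e * (c - (- e * u))))"
    using h1 h3 by simp
  also have "\<dots> = qf lam c False 0 (1 / e) (- e * ln x) / x"
    unfolding qf_def u_def by (simp add: exp_diff exp_minus field_simps)
  finally show ?thesis .
qed

theorem proposition5p1:
  fixes L :: ereal and c lam :: real
  shows
   "(L \<noteq> -\<infinity> \<and> ereal c < L / 2 \<and> (L = \<infinity> \<longrightarrow> lam > 0) \<longrightarrow>
      conv_distr
        (\<lambda>e. distr (GIG (e * lam) (exp (c / e) * alpha_eps L e) (exp (c / e))) borel
                  (\<lambda>x. e * ln x))
        (at_right 0) (stExp lam c (L - ereal c)))
    \<and>
    (lam > 0 \<longrightarrow>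
      conv_distr
        (\<lambda>e. distr (Gam (e * lam) (exp (c / e))) borel (\<lambda>x. - e * ln x))
        (at_right 0) (sExp lam c))"
proof (intro conjI impI)
  assume H: "L \<noteq> -\<infinity> \<and> ereal c < L / 2 \<and> (L = \<infinity> \<longrightarrow> lam > 0)"
  then have L: "L \<noteq> -\<infinity>" and cL: "ereal c < L / 2" and Li: "L = \<infinity> \<longrightarrow> lam > 0" by auto
  define fin where "fin = (L \<noteq> \<infinity>)"
  define r where "r = real_of_ereal L - c"
  have nf: "\<not> fin \<longrightarrow> lam > 0" using Li unfolding fin_def by auto
  have cr: "fin \<longrightarrow> c < r"
  proof
    assume fin
    then obtain l where l: "L = ereal l" using L unfolding fin_def by (cases L) auto
    then have "c < l / 2" using cL by simp
    then show "c < r" unfolding r_def l by simp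
  qed
  have st: "stExp lam c (L - ereal c) = law_prop (g0 lam c fin r)"
    unfolding stExp_def
  proof (intro arg_cong[where f=law_prop] ext)
    fix x
    show "(if c \<le> x \<and> ereal x \<le> L - ereal c then exp (- lam * x) else 0) = g0 lam c fin r x"
      using L unfolding g0_def fin_def r_def by (cases L) auto
  qed
  show "conv_distr
        (\<lambda>e. distr (GIG (e * lam) (exp (c / e) * alpha_eps L e) (exp (c / e))) borel
                  (\<lambda>x. e * ln x))
        (at_right 0) (stExp lam c (L - ereal c))"
  proof -
    have "conv_distr (\<lambda>e. distr (law_prop (\<lambda>x. if 0 < x then x powr (- (e * lam) - 1) * exp (- (exp (c / e) * alpha_eps L e) * x - exp (c / e) / x) else 0)) borel (\<lambda>x. e * ln x))
        (at_right 0) (law_prop (g0 lam c fin r))"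
      by (rule final_conv[where s="\<lambda>e. e" and p="\<lambda>e x. if 0 < x then x powr (- (e * lam) - 1) * exp (- (exp (c / e) * alpha_eps L e) * x - exp (c / e) / x) else 0", OF nf cr])
         (use GIG_pt[OF _ _ L] in \<open>auto simp: fin_def r_def\<close>)
    then show ?thesis unfolding GIG_def st .
  qed
next
  assume lam: "0 < lam"
  have st: "sExp lam c = law_prop (g0 lam c False 0)"
    unfolding sExp_def stExp_def
    by (intro arg_cong[where f=law_prop] ext) (simp add: g0_def)
  show "conv_distr
        (\<lambda>e. distr (Gam (e * lam) (exp (c / e))) borel (\<lambda>x. - e * ln x))
        (at_right 0) (sExp lam c)"
    unfolding Gam_def st
    by (rule final_conv[where s="\<lambda>e. - e"]) (use lam Gam_pt in auto)
qed

end
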